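(* Let $A\in\mathcal{B}(p)$ (defined in the context). Then $A\succ 0$ if and only if $\phi(A)\succ 0$, where explicitly $$\phi(A)=\begin{pmatrix}\alpha_1 & c_{1,2} & \cdots & c_{1,p}\\ c_{1,2} & \alpha_2 & \ddots & \vdots\\ \vdots & \ddots & \ddots & c_{p-1,p}\\ c_{1,p} & \cdots & c_{p-1,p} & \alpha_p\end{pmatrix},\qquad \alpha_k=\frac{1}{n_k}+\frac{n_k-1}{n_k}b_k .$$
   Context: All matrices are real; $\succ 0$ means symmetric positive definite. $J_m$ is the $m\times m$ matrix of ones, $J_{m,q}=\mathbf 1_m\mathbf 1_q^\top$. For integers $p\ge1$ and $n_1,\dots,n_p\ge 1$, $n=\sum_k n_k$, $\mathcal{B}(p)$ is the set of symmetric $n\times n$ block matrices $A=(A_{k,\ell})_{1\le k,\ell\le p}$ (block $A_{k,\ell}$ of size $n_k\times n_\ell$) with diagonal blocks $A_{k,k}=(1-b_k)I_{n_k}+b_kJ_{n_k}$ (ones on the diagonal, $b_k$ off the diagonal) and off-diagonal blocks $A_{k,\ell}=A_{\ell,k}^\top=c_{k,\ell}J_{n_k,n_\ell}$ for $k<\ell$, where all parameters $b_k,c_{k,\ell}$ lie in $]-1,1[$, with the convention $b_k=0$ when $n_k=1$. The block average map $\phi$ sends $A$ to the $p\times p$ matrix $[\phi(A)]_{k,\ell}=\frac{1}{n_kn_\ell}\sum_{i\in G_k,j\in G_\ell}A_{i,j}$, where $G_1$ is the first $n_1$ indices, $G_2$ the next $n_2$, and so on. *)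

theory Defs
  imports "Jordan_Normal_Form.Matrix"
begin

definition pos_def_mat :: "real mat \<Rightarrow> bool" where
  "pos_def_mat A \<longleftrightarrow> A \<in> carrier_mat (dim_row A) (dim_row A) \<and> A\<^sup>T = A \<and>
     (\<forall>x \<in> carrier_vec (dim_row A). x \<noteq> 0\<^sub>v (dim_row A) \<longrightarrow> x \<bullet> (A *\<^sub>v x) > 0)"

definition grp :: "(nat \<Rightarrow> nat) \<Rightarrow> nat \<Rightarrow> nat set" where
  "grp n k = {(\<Sum>j<k. n j) ..< (\<Sum>j<Suc k. n j)}"

definition tot :: "nat \<Rightarrow> (nat \<Rightarrow> nat) \<Rightarrow> nat" where
  "tot p n = (\<Sum>k<p. n k)"

definition in_Bp :: "nat \<Rightarrow> (nat \<Rightarrow> nat) \<Rightarrow> (nat \<Rightarrow> real) \<Rightarrow> (nat \<Rightarrow> nat \<Rightarrow> real)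
    \<Rightarrow> real mat \<Rightarrow> bool" where
  "in_Bp p n b c A \<longleftrightarrow>
     p \<ge> 1 \<and> (\<forall>k<p. n k \<ge> 1) \<and>
     (\<forall>k<p. -1 < b k \<and> b k < 1) \<and>
     (\<forall>k<p. \<forall>l<p. k < l \<longrightarrow> -1 < c k l \<and> c k l < 1) \<and>
     (\<forall>k<p. n k = 1 \<longrightarrow> b k = 0) \<and>
     A \<in> carrier_mat (tot p n) (tot p n) \<and>
     (\<forall>k<p. \<forall>l<p. \<forall>i\<in>grp n k. \<forall>j\<in>grp n l.
        A $$ (i, j) = (if k = l then (if i = j then 1 else b k)
                       else if k < l then c k l else c l k))"

definition block_avg :: "nat \<Rightarrow> (nat \<Rightarrow> nat) \<Rightarrow> real mat \<Rightarrow> real mat" where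
  "block_avg p n A = mat p p (\<lambda>(k, l).
     (1 / (real (n k) * real (n l))) * (\<Sum>i\<in>grp n k. \<Sum>j\<in>grp n l. A $$ (i, j)))"

end

theory Submission
  imports Defs
begin

lemma cs_sum:
  fixes x :: "nat \<Rightarrow> real"
  assumes "finite G"
  shows "(\<Sum>i\<in>G. x i)^2 \<le> real (card G) * (\<Sum>i\<in>G. (x i)^2)"
proof -
  have "0 \<le> (\<Sum>i\<in>G. \<Sum>j\<in>G. (x i - x j)^2)" by (intro sum_nonneg) auto
  also have "\<dots> = (\<Sum>i\<in>G. \<Sum>j\<in>G. (x i)^2 + (x j)^2 - 2 * x i * x j)"
    by (simp add: power2_diff)
  also have "\<dots> = 2 * (real (card G) * (\<Sum>i\<in>G. (x i)^2)) - 2 * (\<Sum>i\<in>G. x i)^2"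
    apply (simp add: sum.distrib sum_subtractf sum_distrib_left sum_distrib_right power2_eq_square
          mult.assoc mult.left_commute)
    apply (subst sum.swap) apply (simp add: ac_simps)
    done
  finally show ?thesis by simp
qed

lemma psum_mono: "a \<le> b \<Longrightarrow> (\<Sum>j<a. n j) \<le> (\<Sum>j<b. (n::nat\<Rightarrow>nat) j)"
  by (rule sum_mono2) auto

lemma sum_groups: "(\<Sum>i<tot p n. f i) = (\<Sum>k<p. \<Sum>i\<in>grp n k. f i)"
proof (induction p)
  case 0 then show ?case by (simp add: tot_def)
next
  case (Suc p)
  have "(\<Sum>i<tot (Suc p) n. f i) = (\<Sum>i\<in>{0..<tot p n}. f i) + (\<Sum>i\<in>{tot p n..<tot (Suc p) n}. f i)"
    by (subst sum.atLeastLessThan_concat) (auto simp: tot_def atLeast0LessThan)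
  then show ?case using Suc by (simp add: tot_def grp_def atLeast0LessThan)
qed

lemma card_grp: "card (grp n k) = n k"
  by (simp add: grp_def)

lemma grp_bound: "k < p \<Longrightarrow> i \<in> grp n k \<Longrightarrow> i < tot p n"
  unfolding grp_def tot_def using psum_mono[of "Suc k" p n] by auto

lemma grp_disj: "i \<in> grp n k \<Longrightarrow> i \<in> grp n l \<Longrightarrow> k = l"
proof (rule ccontr)
  assume a: "i \<in> grp n k" "i \<in> grp n l" "k \<noteq> l"
  have "\<And>k l. k < l \<Longrightarrow> i \<in> grp n k \<Longrightarrow> i \<in> grp n l \<Longrightarrow> False"
    unfolding grp_def using psum_mono[of "Suc _" _ n]
    by (metis atLeastLessThan_iff leD less_eq_Suc_le order.strict_trans2)
  with a show False by (metis nat_neq_iff)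
qed

lemma grp_exists: "i < tot p n \<Longrightarrow> \<exists>k<p. i \<in> grp n k"
proof (induction p)
  case 0 then show ?case by (simp add: tot_def)
next
  case (Suc p)
  show ?case
  proof (cases "i < tot p n")
    case True then show ?thesis using Suc by (meson less_SucI)
  next
    case False then have "i \<in> grp n p" using Suc.prems by (auto simp: grp_def tot_def)
    then show ?thesis by auto
  qed
qed

definition Bf :: "(nat \<Rightarrow> real) \<Rightarrow> (nat \<Rightarrow> nat \<Rightarrow> real) \<Rightarrow> nat \<Rightarrow> nat \<Rightarrow> real" where
  "Bf b c k l = (if k = l then b k else if k < l then c k l else c l k)"

lemma Bf_sym: "Bf b c k l = Bf b c l k"
  by (auto simp: Bf_def)

lemma entryA:
  assumes "in_Bp p n b c A" "k<p" "l<p" "i\<in>grp n k" "j\<in>grp n l"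
  shows "A$$(i,j) = (if k = l \<and> i = j then 1 - b k else 0) + Bf b c k l"
  using assms unfolding in_Bp_def Bf_def by auto

lemma delta_lemma:
  fixes x :: "nat \<Rightarrow> real"
  assumes "k<p" "i\<in>grp n k"
  shows "(\<Sum>l<p. \<Sum>j\<in>grp n l. x i * (if k = l \<and> i = j then d else 0) * x j) = d * (x i)^2"
proof -
  have "\<And>l. (\<Sum>j\<in>grp n l. x i * (if k = l \<and> i = j then d else 0) * x j) = (if l = k then d * (x i)^2 else 0)"
  proof -
    fix l
    show "(\<Sum>j\<in>grp n l. x i * (if k = l \<and> i = j then d else 0) * x j) = (if l = k then d * (x i)^2 else 0)"
    proof (cases "l = k")
      case True
      have "(\<Sum>j\<in>grp n l. x i * (if k = l \<and> i = j then d else 0) * x j) = (\<Sum>j\<in>grp n l. if j = i then d * (x i)^2 else 0)"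
        by (rule sum.cong) (auto simp: True power2_eq_square)
      also have "\<dots> = d * (x i)^2" using assms True by (simp add: grp_def)
      finally show ?thesis using True by simp
    qed auto
  qed
  then have "(\<Sum>l<p. \<Sum>j\<in>grp n l. x i * (if k = l \<and> i = j then d else 0) * x j) = (\<Sum>l<p. if l = k then d * (x i)^2 else 0)"
    by simp
  also have "\<dots> = d * (x i)^2" using assms by simp
  finally show ?thesis .
qed

lemma cross_lemma:
  fixes x :: "nat \<Rightarrow> real"
  shows "(\<Sum>i\<in>grp n k. \<Sum>l<p. \<Sum>j\<in>grp n l. B l * x i * x j) = (\<Sum>l<p. B l * (\<Sum>i\<in>grp n k. x i) * (\<Sum>j\<in>grp n l. x j))"
proof -
  have "(\<Sum>i\<in>grp n k. \<Sum>l<p. \<Sum>j\<in>grp n l. B l * x i * x j) = (\<Sum>l<p. \<Sum>i\<in>grp n k. \<Sum>j\<in>grp n l. B l * x i * x j)"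
    by (rule sum.swap)
  also have "\<dots> = (\<Sum>l<p. B l * (\<Sum>i\<in>grp n k. x i) * (\<Sum>j\<in>grp n l. x j))"
    by (rule sum.cong[OF refl]) (simp add: sum_distrib_left sum_distrib_right ac_simps)
  finally show ?thesis .
qed

lemma qf_gen:
  fixes A :: "real mat"
  assumes "A \<in> carrier_mat N N" "x \<in> carrier_vec N"
  shows "x \<bullet> (A *\<^sub>v x) = (\<Sum>i<N. \<Sum>j<N. x$i * A$$(i,j) * x$j)"
  using assms
  by (simp add: scalar_prod_def sum_distrib_left atLeast0LessThan mult.assoc mult.left_commute)

lemma qfA:
  assumes B: "in_Bp p n b c A" and x: "x \<in> carrier_vec (tot p n)"
  shows "x \<bullet> (A *\<^sub>v x) = (\<Sum>k<p. (1 - b k) * (\<Sum>i\<in>grp n k. (x$i)^2))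
      + (\<Sum>k<p. \<Sum>l<p. Bf b c k l * (\<Sum>i\<in>grp n k. x$i) * (\<Sum>j\<in>grp n l. x$j))"
proof -
  have AC: "A \<in> carrier_mat (tot p n) (tot p n)" using B by (simp add: in_Bp_def)
  have "x \<bullet> (A *\<^sub>v x) = (\<Sum>i<tot p n. \<Sum>j<tot p n. x$i * A$$(i,j) * x$j)"
    by (rule qf_gen[OF AC x])
  also have "\<dots> = (\<Sum>k<p. \<Sum>i\<in>grp n k. \<Sum>l<p. \<Sum>j\<in>grp n l.
       x$i * ((if k = l \<and> i = j then 1 - b k else 0) + Bf b c k l) * x$j)"
    unfolding sum_groups
    by (intro sum.cong refl) (simp add: entryA[OF B])
  also have "\<dots> = (\<Sum>k<p. \<Sum>i\<in>grp n k. (1 - b k) * (x$i)^2)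
      + (\<Sum>k<p. \<Sum>i\<in>grp n k. \<Sum>l<p. \<Sum>j\<in>grp n l. Bf b c k l * x$i * x$j)"
    unfolding sum.distrib[symmetric]
    apply (intro sum.cong refl)
    apply (simp only: distrib_left distrib_right sum.distrib)
    apply (subst delta_lemma[where x="\<lambda>i. x$i"], simp, simp)
    apply (simp add: ac_simps)
    done
  also have "\<dots> = (\<Sum>k<p. (1 - b k) * (\<Sum>i\<in>grp n k. (x$i)^2))
      + (\<Sum>k<p. \<Sum>l<p. Bf b c k l * (\<Sum>i\<in>grp n k. x$i) * (\<Sum>j\<in>grp n l. x$j))"
    by (simp add: sum_distrib_left cross_lemma[where x="\<lambda>i. x$i"])
  finally show ?thesis .
qed


lemma avg_formula:
  assumes B: "in_Bp p n b c A"
  shows "block_avg p n A = mat p p (\<lambda>(k,l). (if k = l then (1 - b k) / real (n k) else 0) + Bf b c k l)"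
proof (rule eq_matI)
  show "dim_row (block_avg p n A) = dim_row (mat p p (\<lambda>(k,l). (if k = l then (1 - b k) / real (n k) else 0) + Bf b c k l))"
    by (simp add: block_avg_def)
  show "dim_col (block_avg p n A) = dim_col (mat p p (\<lambda>(k,l). (if k = l then (1 - b k) / real (n k) else 0) + Bf b c k l))"
    by (simp add: block_avg_def)
  fix k l assume kl: "k < dim_row (mat p p (\<lambda>(k,l). (if k = l then (1 - b k) / real (n k) else 0) + Bf b c k l))"
    "l < dim_col (mat p p (\<lambda>(k,l). (if k = l then (1 - b k) / real (n k) else 0) + Bf b c k l))"
  then have k: "k < p" and l: "l < p" by auto
  have nk: "n k \<ge> 1" "n l \<ge> 1" using B k l by (auto simp: in_Bp_def)
  have inner: "\<And>i. i \<in> grp n k \<Longrightarrow> (\<Sum>j\<in>grp n l. A $$ (i,j)) = (if k = l then 1 - b k else 0) + real (n l) * Bf b c k l"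
  proof -
    fix i assume i: "i \<in> grp n k"
    have "(\<Sum>j\<in>grp n l. A $$ (i,j)) = (\<Sum>j\<in>grp n l. (if k = l \<and> i = j then 1 - b k else 0) + Bf b c k l)"
      by (rule sum.cong[OF refl]) (simp add: entryA[OF B k l i])
    also have "\<dots> = (\<Sum>j\<in>grp n l. (if i = j then (if k = l then 1 - b k else 0) else 0)) + real (n l) * Bf b c k l"
      by (simp add: sum.distrib card_grp)
    also have "\<dots> = (if k = l then 1 - b k else 0) + real (n l) * Bf b c k l"
      using i by (auto simp: grp_def)
    finally show "(\<Sum>j\<in>grp n l. A $$ (i,j)) = (if k = l then 1 - b k else 0) + real (n l) * Bf b c k l" .
  qed
  have "(\<Sum>i\<in>grp n k. \<Sum>j\<in>grp n l. A $$ (i,j)) = real (n k) * ((if k = l then 1 - b k else 0) + real (n l) * Bf b c k l)"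
    by (simp add: inner card_grp)
  then show "block_avg p n A $$ (k, l) = mat p p (\<lambda>(k,l). (if k = l then (1 - b k) / real (n k) else 0) + Bf b c k l) $$ (k, l)"
    using k l nk by (simp add: block_avg_def field_simps)
qed

lemma qfPhi:
  assumes z: "z \<in> carrier_vec p"
  shows "z \<bullet> (mat p p (\<lambda>(k,l). (if k = l then (1 - b k) / real (n k) else 0) + Bf b c k l) *\<^sub>v z)
     = (\<Sum>k<p. (1 - b k) / real (n k) * (z$k)^2) + (\<Sum>k<p. \<Sum>l<p. Bf b c k l * z$k * z$l)"
proof -
  have "z \<bullet> (mat p p (\<lambda>(k,l). (if k = l then (1 - b k) / real (n k) else 0) + Bf b c k l) *\<^sub>v z)
     = (\<Sum>k<p. \<Sum>l<p. z$k * ((if k = l then (1 - b k) / real (n k) else 0) + Bf b c k l) * z$l)"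
    by (subst qf_gen[OF _ z]) auto
  also have "\<dots> = (\<Sum>k<p. \<Sum>l<p. (if l = k then (1 - b k) / real (n k) * (z$k)^2 else 0)) + (\<Sum>k<p. \<Sum>l<p. Bf b c k l * z$k * z$l)"
    unfolding sum.distrib[symmetric]
    by (intro sum.cong refl) (auto simp: algebra_simps power2_eq_square)
  also have "\<dots> = (\<Sum>k<p. (1 - b k) / real (n k) * (z$k)^2) + (\<Sum>k<p. \<Sum>l<p. Bf b c k l * z$k * z$l)"
    by simp
  finally show ?thesis .
qed


lemma sum_single_grp:
  assumes "k < p" "i \<in> grp n k"
  shows "(\<Sum>l<p. if i \<in> grp n l then f l else 0) = (f k :: real)"
proof -
  have "(\<Sum>l<p. if i \<in> grp n l then f l else 0) = (\<Sum>l<p. if l = k then f l else 0)"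
    by (rule sum.cong[OF refl]) (auto dest: grp_disj[OF assms(2)] intro: assms(2))
  then show ?thesis using assms by simp
qed

theorem theorem2:
  fixes p :: nat and n :: "nat \<Rightarrow> nat" and b :: "nat \<Rightarrow> real"
    and c :: "nat \<Rightarrow> nat \<Rightarrow> real" and A :: "real mat"
  assumes "in_Bp p n b c A"
  shows "(pos_def_mat A \<longleftrightarrow> pos_def_mat (block_avg p n A)) \<and>
         block_avg p n A = mat p p (\<lambda>(k, l).
            if k = l then 1 / real (n k) + (real (n k) - 1) / real (n k) * b k
            else if k < l then c k l else c l k)"
proof -
  note B = assms
  define N where "N = tot p n"
  define \<Phi> where "\<Phi> = mat p p (\<lambda>(k,l). (if k = l then (1 - b k) / real (n k) else 0) + Bf b c k l)"
  have avg: "block_avg p n A = \<Phi>" unfolding \<Phi>_def by (rule avg_formula[OF B])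
  have AC: "A \<in> carrier_mat N N" using B by (simp add: in_Bp_def N_def)
  have nk: "\<And>k. k < p \<Longrightarrow> n k \<ge> 1" using B by (simp add: in_Bp_def)
  have bk: "\<And>k. k < p \<Longrightarrow> b k < 1" using B by (simp add: in_Bp_def)
  have part2: "\<Phi> = mat p p (\<lambda>(k, l).
            if k = l then 1 / real (n k) + (real (n k) - 1) / real (n k) * b k
            else if k < l then c k l else c l k)"
  proof (rule eq_matI)
    fix k l assume "k < dim_row (mat p p (\<lambda>(k, l).
            if k = l then 1 / real (n k) + (real (n k) - 1) / real (n k) * b k
            else if k < l then c k l else c l k))" "l < dim_col (mat p p (\<lambda>(k, l).
            if k = l then 1 / real (n k) + (real (n k) - 1) / real (n k) * b k
            else if k < l then c k l else c l k))"
    then have k: "k < p" "l < p" by auto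
    show "\<Phi> $$ (k, l) = mat p p (\<lambda>(k, l).
            if k = l then 1 / real (n k) + (real (n k) - 1) / real (n k) * b k
            else if k < l then c k l else c l k) $$ (k, l)"
      using k nk[of k] by (auto simp: \<Phi>_def Bf_def field_simps)
  qed (auto simp: \<Phi>_def)
  have symA: "A\<^sup>T = A"
  proof (rule eq_matI)
    fix i j assume "i < dim_row A" "j < dim_col A"
    then have ij: "i < tot p n" "j < tot p n" using AC by (auto simp: N_def)
    obtain k where k: "k < p" "i \<in> grp n k" using grp_exists[OF ij(1)] by blast
    obtain l where l: "l < p" "j \<in> grp n l" using grp_exists[OF ij(2)] by blast
    show "A\<^sup>T $$ (i, j) = A $$ (i, j)"
      using ij AC entryA[OF B k(1) l(1) k(2) l(2)] entryA[OF B l(1) k(1) l(2) k(2)] Bf_sym[of b c k l]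
      by (auto simp: N_def)
  qed (use AC in auto)
  have symP: "\<Phi>\<^sup>T = \<Phi>"
    by (rule eq_matI) (auto simp: \<Phi>_def Bf_sym)
  have PC: "\<Phi> \<in> carrier_mat p p" by (simp add: \<Phi>_def)
  have pdA: "pos_def_mat A \<longleftrightarrow> (\<forall>x \<in> carrier_vec N. x \<noteq> 0\<^sub>v N \<longrightarrow> x \<bullet> (A *\<^sub>v x) > 0)"
    using AC symA by (auto simp: pos_def_mat_def)
  have pdP: "pos_def_mat \<Phi> \<longleftrightarrow> (\<forall>z \<in> carrier_vec p. z \<noteq> 0\<^sub>v p \<longrightarrow> z \<bullet> (\<Phi> *\<^sub>v z) > 0)"
    using PC symP by (auto simp: pos_def_mat_def)
  have qA: "\<And>x. x \<in> carrier_vec N \<Longrightarrow> x \<bullet> (A *\<^sub>v x) = (\<Sum>k<p. (1 - b k) * (\<Sum>i\<in>grp n k. (x$i)^2))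
      + (\<Sum>k<p. \<Sum>l<p. Bf b c k l * (\<Sum>i\<in>grp n k. x$i) * (\<Sum>j\<in>grp n l. x$j))"
    using qfA[OF B] by (simp add: N_def)
  have qP: "\<And>z. z \<in> carrier_vec p \<Longrightarrow> z \<bullet> (\<Phi> *\<^sub>v z)
     = (\<Sum>k<p. (1 - b k) / real (n k) * (z$k)^2) + (\<Sum>k<p. \<Sum>l<p. Bf b c k l * z$k * z$l)"
    unfolding \<Phi>_def by (rule qfPhi)
  have part1: "pos_def_mat A \<longleftrightarrow> pos_def_mat \<Phi>"
  proof
    assume "pos_def_mat A"
    then have PA: "\<And>x. x \<in> carrier_vec N \<Longrightarrow> x \<noteq> 0\<^sub>v N \<Longrightarrow> x \<bullet> (A *\<^sub>v x) > 0" using pdA by blast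
    show "pos_def_mat \<Phi>" unfolding pdP
    proof (intro ballI impI)
      fix z :: "real vec" assume z: "z \<in> carrier_vec p" "z \<noteq> 0\<^sub>v p"
      define x where "x = vec N (\<lambda>i. \<Sum>k<p. if i \<in> grp n k then z$k / real (n k) else 0)"
      have xC: "x \<in> carrier_vec N" by (simp add: x_def)
      have xi: "\<And>k i. k < p \<Longrightarrow> i \<in> grp n k \<Longrightarrow> x$i = z$k / real (n k)"
        using grp_bound by (simp add: x_def N_def sum_single_grp)
      have ys: "(\<Sum>i\<in>grp n k. x$i) = z$k" if "k < p" for k
        using nk[OF that] that by (simp add: xi card_grp)
      have sq: "(\<Sum>i\<in>grp n k. (x$i)^2) = (z$k)^2 / real (n k)" if "k < p" for k
        using nk[OF that] that by (simp add: xi card_grp power2_eq_square)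
      have "x \<noteq> 0\<^sub>v N"
      proof
        assume x0: "x = 0\<^sub>v N"
        have "z = 0\<^sub>v p"
        proof (rule eq_vecI)
          fix k assume "k < dim_vec (0\<^sub>v p)"
          then have k: "k < p" by simp
          have "\<And>i. i \<in> grp n k \<Longrightarrow> x$i = 0" using x0 grp_bound[OF k] by (auto simp: N_def)
          then have "(\<Sum>i\<in>grp n k. x$i) = 0" by simp
          then show "z $ k = 0\<^sub>v p $ k" using ys[OF k] k by simp
        qed (use z in auto)
        with z show False by simp
      qed
      then have "x \<bullet> (A *\<^sub>v x) > 0" using PA xC by blast
      also have "x \<bullet> (A *\<^sub>v x) = z \<bullet> (\<Phi> *\<^sub>v z)"
        unfolding qA[OF xC] qP[OF z(1)]
        by (simp add: ys sq)
      finally show "z \<bullet> (\<Phi> *\<^sub>v z) > 0" .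
    qed
  next
    assume "pos_def_mat \<Phi>"
    then have PP: "\<And>z. z \<in> carrier_vec p \<Longrightarrow> z \<noteq> 0\<^sub>v p \<Longrightarrow> z \<bullet> (\<Phi> *\<^sub>v z) > 0" using pdP by blast
    show "pos_def_mat A" unfolding pdA
    proof (intro ballI impI)
      fix x :: "real vec" assume x: "x \<in> carrier_vec N" "x \<noteq> 0\<^sub>v N"
      define z where "z = vec p (\<lambda>k. \<Sum>i\<in>grp n k. x$i)"
      have zC: "z \<in> carrier_vec p" by (simp add: z_def)
      have zk: "\<And>k. k < p \<Longrightarrow> z$k = (\<Sum>i\<in>grp n k. x$i)" by (simp add: z_def)
      have cmp: "\<And>k. k < p \<Longrightarrow> (1 - b k) / real (n k) * (z$k)^2 \<le> (1 - b k) * (\<Sum>i\<in>grp n k. (x$i)^2)"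
      proof -
        fix k assume k: "k < p"
        have cs: "(z$k)^2 \<le> real (n k) * (\<Sum>i\<in>grp n k. (x$i)^2)"
          using cs_sum[of "grp n k" "\<lambda>i. x$i"] by (simp add: zk[OF k] card_grp grp_def)
        have "(z$k)^2 / real (n k) \<le> (\<Sum>i\<in>grp n k. (x$i)^2)"
          using cs nk[OF k] by (simp add: divide_le_eq mult.commute)
        then have "(1 - b k) * ((z$k)^2 / real (n k)) \<le> (1 - b k) * (\<Sum>i\<in>grp n k. (x$i)^2)"
          using bk[OF k] by (intro mult_left_mono) auto
        then show "(1 - b k) / real (n k) * (z$k)^2 \<le> (1 - b k) * (\<Sum>i\<in>grp n k. (x$i)^2)" by simp
      qed
      have ge: "z \<bullet> (\<Phi> *\<^sub>v z) \<le> x \<bullet> (A *\<^sub>v x)"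
        unfolding qA[OF x(1)] qP[OF zC]
        using sum_mono[of "{..<p}" "\<lambda>k. (1 - b k) / real (n k) * (z$k)^2" "\<lambda>k. (1 - b k) * (\<Sum>i\<in>grp n k. (x$i)^2)"] cmp
        by (simp add: zk)
      show "x \<bullet> (A *\<^sub>v x) > 0"
      proof (cases "z = 0\<^sub>v p")
        case False
        then show ?thesis using PP[OF zC] ge by linarith
      next
        case True
        then have z0: "\<And>k. k < p \<Longrightarrow> (\<Sum>i\<in>grp n k. x$i) = 0"
          using zk by (metis index_zero_vec(1))
        obtain i where i: "i < N" "x$i \<noteq> 0"
          using x by (metis carrier_vecD eq_vecI index_zero_vec(1) index_zero_vec(2))
        obtain k where k: "k < p" "i \<in> grp n k" using grp_exists[of i p n] i(1) by (auto simp: N_def)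
        have "0 < (\<Sum>k<p. (1 - b k) * (\<Sum>i\<in>grp n k. (x$i)^2))"
        proof (rule sum_pos2[of _ k])
          have "0 < (\<Sum>i\<in>grp n k. (x$i)^2)"
            by (rule sum_pos2[of _ i]) (use i k in \<open>auto simp: grp_def\<close>)
          then show "0 < (1 - b k) * (\<Sum>i\<in>grp n k. (x$i)^2)" using bk[OF k(1)] by simp
        next
          fix l assume "l \<in> {..<p}"
          then show "0 \<le> (1 - b l) * (\<Sum>i\<in>grp n l. (x$i)^2)" using bk[of l]
            by (intro mult_nonneg_nonneg sum_nonneg) auto
        qed (use k in auto)
        then show ?thesis unfolding qA[OF x(1)] by (simp add: z0)
      qed
    qed
  qed
  show ?thesis using part1 part2 avg by simp
qed

end
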